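(* Let $X$ be a real locally convex Hausdorff topological vector space with dual $X^*$. Let $D\subset X$ be nonempty and of the form $$D=\Big\{\sum_{i=1}^k\lambda_iu_i+\sum_{j=1}^\ell\mu_jv_j \ \Big|\ \lambda_i\ge 0\ \forall i,\ \sum_{i=1}^k\lambda_i=1,\ \mu_j\ge 0\ \forall j\Big\}+X_0,$$ where $u_1,\dots,u_k\in X$ ($k\ge1$), $v_1,\dots,v_\ell\in X$, and $X_0\subset X$ is a closed linear subspace. Let $x^*\in X^*$ be such that the problem $\min\{\langle x^*,x\rangle\mid x\in D\}$ has a solution, and let $S(x^* )$ be its solution set. Define $$I(x^* ):=\{i_0\in\{1,\dots,k\}\mid \langle x^*,u_{i_0}\rangle\le\langle x^*,u_i\rangle\ \forall i=1,\dots,k\},\qquad J(x^* ):=\{j_0\in\{1,\dots,\ell\}\mid \langle x^*,v_{j_0}\rangle=0\}.$$ Then $$S(x^* )=\Big\{\sum_{i\in I(x^* )}\lambda_iu_i+\sum_{j\in J(x^* )}\mu_jv_j\ \Big|\ \lambda_i\ge0\ \forall i\in I(x^* ),\ \sum_{i\in I(x^* )}\lambda_i=1,\ \mu_j\ge0\ \forall j\in J(x^* )\Big\}+X_0.$$ In particular, $S(x^* )$ is a generalized polyhedral convex set.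
   Context: $\langle x^*,x\rangle$ denotes the value of $x^*\in X^*$ at $x\in X$. A subset $C\subset X$ is a generalized polyhedral convex set if there exist $x_i^*\in X^*$, $\alpha_i\in\mathbb{R}$, $i=1,\dots,p$, and a closed affine subspace $L\subset X$ with $C=\{x\in L\mid \langle x_i^*,x\rangle\le\alpha_i,\ i=1,\dots,p\}$. A sum over an empty index set is $0$. *)

theory Defs
  imports "HOL-Analysis.Analysis"
begin

definition lc_tvs :: "'a::{real_vector, topological_space} itself \<Rightarrow> bool" where
  "lc_tvs _ \<longleftrightarrow>
     continuous_on UNIV (\<lambda>p::'a \<times> 'a. fst p + snd p) \<and>
     continuous_on UNIV (\<lambda>p::real \<times> 'a. scaleR (fst p) (snd p)) \<and>
     (\<forall>U::'a set. open U \<and> 0 \<in> U \<longrightarrow> (\<exists>V. open V \<and> convex V \<and> 0 \<in> V \<and> V \<subseteq> U))"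

definition dual_elem :: "('a::{real_vector, topological_space} \<Rightarrow> real) \<Rightarrow> bool" where
  "dual_elem f \<longleftrightarrow> linear f \<and> continuous_on UNIV f"

definition gen_polyhedral :: "'a::{real_vector, topological_space} set \<Rightarrow> bool" where
  "gen_polyhedral C \<longleftrightarrow>
     (\<exists>(p::nat) (xs :: nat \<Rightarrow> 'a \<Rightarrow> real) (\<alpha> :: nat \<Rightarrow> real) (L :: 'a set).
        (\<forall>i\<in>{1..p}. dual_elem (xs i)) \<and> closed L \<and> affine L \<and>
        C = {x \<in> L. \<forall>i\<in>{1..p}. xs i x \<le> \<alpha> i})"

definition gen_set :: "nat set \<Rightarrow> (nat \<Rightarrow> 'a::real_vector) \<Rightarrow> nat set \<Rightarrow> (nat \<Rightarrow> 'a) \<Rightarrow> 'a set \<Rightarrow> 'a set" where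
  "gen_set I u J v X0 =
     {(\<Sum>i\<in>I. lam i *\<^sub>R u i) + (\<Sum>j\<in>J. mu j *\<^sub>R v j) + z | lam mu z.
        (\<forall>i\<in>I. lam i \<ge> 0) \<and> (\<Sum>i\<in>I. lam i) = 1 \<and> (\<forall>j\<in>J. mu j \<ge> 0) \<and> z \<in> X0}"

end

theory Submission
  imports Defs
begin


lemma closed_vimage_UNIV: "closed B \<Longrightarrow> continuous_on UNIV f \<Longrightarrow> closed (f -` B)"
  using closed_vimage_Int[of B UNIV f] by simp

lemma open_vimage_UNIV: "open B \<Longrightarrow> continuous_on UNIV f \<Longrightarrow> open (f -` B)"
  using continuous_on_open_vimage[of UNIV f] by simp

lemma lc_add:
  fixes f g :: "'c::topological_space \<Rightarrow> 'b::{real_vector,topological_space}"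
  assumes "lc_tvs TYPE('b)" "continuous_on UNIV f" "continuous_on UNIV g"
  shows "continuous_on UNIV (\<lambda>x. f x + g x)"
proof -
  have a: "continuous_on UNIV (\<lambda>p::'b \<times> 'b. fst p + snd p)" using assms(1) unfolding lc_tvs_def by blast
  show ?thesis
    using continuous_on_compose2[OF a continuous_on_Pair[OF assms(2,3)]] by simp
qed

lemma lc_scale:
  fixes f :: "'c::topological_space \<Rightarrow> real" and g :: "'c \<Rightarrow> 'b::{real_vector,topological_space}"
  assumes "lc_tvs TYPE('b)" "continuous_on UNIV f" "continuous_on UNIV g"
  shows "continuous_on UNIV (\<lambda>x. f x *\<^sub>R g x)"
proof -
  have a: "continuous_on UNIV (\<lambda>p::real \<times> 'b. fst p *\<^sub>R snd p)" using assms(1) unfolding lc_tvs_def by blast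
  show ?thesis
    using continuous_on_compose2[OF a continuous_on_Pair[OF assms(2,3)]] by simp
qed

lemma lc_diff:
  fixes f g :: "'c::topological_space \<Rightarrow> 'b::{real_vector,topological_space}"
  assumes "lc_tvs TYPE('b)" "continuous_on UNIV f" "continuous_on UNIV g"
  shows "continuous_on UNIV (\<lambda>x. f x - g x)"
proof -
  have "continuous_on UNIV (\<lambda>x. (-1::real) *\<^sub>R g x)"
    by (rule lc_scale[OF assms(1) continuous_on_const assms(3)])
  from lc_add[OF assms(1,2) this] show ?thesis by simp
qed

lemma lc_prod:
  assumes "lc_tvs TYPE('a::{real_vector,topological_space})"
  shows "lc_tvs TYPE('a \<times> real)"
proof -
  have a: "continuous_on UNIV (\<lambda>p::'a \<times> 'a. fst p + snd p)"
    and s: "continuous_on UNIV (\<lambda>p::real \<times> 'a. fst p *\<^sub>R snd p)"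
    and l: "\<And>U::'a set. open U \<Longrightarrow> 0 \<in> U \<Longrightarrow> (\<exists>V. open V \<and> convex V \<and> 0 \<in> V \<and> V \<subseteq> U)"
    using assms unfolding lc_tvs_def by blast+
  have 1: "continuous_on UNIV (\<lambda>p::('a\<times>real) \<times> ('a\<times>real). fst p + snd p)"
  proof -
    have "continuous_on UNIV (\<lambda>p::('a\<times>real) \<times> ('a\<times>real). fst (fst p) + fst (snd p))"
      by (rule lc_add[OF assms]) (auto intro!: continuous_intros)
    moreover have "continuous_on UNIV (\<lambda>p::('a\<times>real) \<times> ('a\<times>real). snd (fst p) + snd (snd p))"
      by (auto intro!: continuous_intros)
    ultimately have "continuous_on UNIV (\<lambda>p::('a\<times>real) \<times> ('a\<times>real). (fst (fst p) + fst (snd p), snd (fst p) + snd (snd p)))"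
      by (rule continuous_on_Pair)
    thus ?thesis by (simp add: plus_prod_def)
  qed
  have 2: "continuous_on UNIV (\<lambda>p::real \<times> ('a\<times>real). fst p *\<^sub>R snd p)"
  proof -
    have "continuous_on UNIV (\<lambda>p::real \<times> ('a\<times>real). fst p *\<^sub>R fst (snd p))"
      by (rule lc_scale[OF assms]) (auto intro!: continuous_intros)
    moreover have "continuous_on UNIV (\<lambda>p::real \<times> ('a\<times>real). fst p * snd (snd p))"
      by (auto intro!: continuous_intros)
    ultimately have "continuous_on UNIV (\<lambda>p::real \<times> ('a\<times>real). (fst p *\<^sub>R fst (snd p), fst p * snd (snd p)))"
      by (rule continuous_on_Pair)
    thus ?thesis by (simp add: scaleR_prod_def)
  qed
  have 3: "\<exists>V. open V \<and> convex V \<and> 0 \<in> V \<and> V \<subseteq> U" if U: "open U" "(0::'a\<times>real) \<in> U" for U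
  proof -
    obtain A B where AB: "open A" "open B" "(0::'a\<times>real) \<in> A \<times> B" "A \<times> B \<subseteq> U"
      using open_prod_elim[OF U] by blast
    have "0 \<in> A" "(0::real) \<in> B" using AB(3) by (auto simp: zero_prod_def)
    then obtain V where V: "open V" "convex V" "0 \<in> V" "V \<subseteq> A" using l AB(1) by blast
    obtain e where e: "e > 0" "ball (0::real) e \<subseteq> B" using AB(2) \<open>0 \<in> B\<close> open_contains_ball by blast
    show ?thesis
      by (rule exI[of _ "V \<times> ball 0 e"])
         (use V e AB in \<open>auto simp: open_Times convex_Times zero_prod_def\<close>)
  qed
  show ?thesis unfolding lc_tvs_def using 1 2 3 by blast
qed


lemma aux1: "t > 0 \<Longrightarrow> c \<le> P - inverse t * a \<Longrightarrow> t * c \<le> t * P - (a::real)"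
proof -
  assume t: "t > 0" and h: "c \<le> P - inverse t * a"
  have "t * c \<le> t * (P - inverse t * a)" using mult_left_mono[OF h] t by simp
  also have "\<dots> = t * P - a" using t by (simp add: right_diff_distrib)
  finally show ?thesis .
qed
lemma aux2: "s > 0 \<Longrightarrow> inverse s * a - P \<le> c \<Longrightarrow> a - s * P \<le> s * (c::real)"
proof -
  assume t: "s > 0" and h: "inverse s * a - P \<le> c"
  have "s * (inverse s * a - P) \<le> s * c" using mult_left_mono[OF h] t by simp
  moreover have "s * (inverse s * a - P) = a - s * P" using t by (simp add: right_diff_distrib)
  ultimately show ?thesis by simp
qed

lemma hb_graph:
  fixes p :: "'b::real_vector \<Rightarrow> real" and G0 :: "('b \<times> real) set"
  assumes sub: "\<And>x y. p (x+y) \<le> p x + p y"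
    and hom: "\<And>c x. c > 0 \<Longrightarrow> p (c *\<^sub>R x) = c * p x"
    and G0s: "subspace G0"
    and G0f: "\<And>x a b. (x,a)\<in>G0 \<Longrightarrow> (x,b)\<in>G0 \<Longrightarrow> a = b"
    and G0p: "\<And>x a. (x,a)\<in>G0 \<Longrightarrow> a \<le> p x"
  shows "\<exists>F. linear F \<and> (\<forall>x a. (x,a)\<in>G0 \<longrightarrow> F x = a) \<and> (\<forall>x. F x \<le> p x)"
proof -
  define A where "A = {G::('b \<times> real) set. subspace G \<and> (\<forall>x a b. (x,a)\<in>G \<longrightarrow> (x,b)\<in>G \<longrightarrow> a=b)
      \<and> (\<forall>x a. (x,a)\<in>G \<longrightarrow> a \<le> p x) \<and> G0 \<subseteq> G}"
  have "G0 \<in> A" using G0s G0f G0p unfolding A_def by blast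
  hence ne: "A \<noteq> {}" by blast
  have ch: "\<Union>C \<in> A" if C: "C \<noteq> {}" "subset.chain A C" for C
  proof -
    have CA: "C \<subseteq> A" and tot: "\<And>X Y. X\<in>C \<Longrightarrow> Y\<in>C \<Longrightarrow> X \<subseteq> Y \<or> Y \<subseteq> X"
      using C(2) unfolding subset_chain_def by blast+
    have two: "\<exists>Z\<in>C. X \<subseteq> Z \<and> Y \<subseteq> Z" if "X\<in>C" "Y\<in>C" for X Y
      using tot[OF that] that by blast
    have sC: "subspace G" if "G \<in> C" for G using CA that unfolding A_def by blast
    have fC: "\<And>x a b. (x,a)\<in>G \<Longrightarrow> (x,b)\<in>G \<Longrightarrow> a=b" if "G \<in> C" for G using CA that unfolding A_def by blast
    have pC: "\<And>x a. (x,a)\<in>G \<Longrightarrow> a \<le> p x" if "G \<in> C" for G using CA that unfolding A_def by blast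
    have gC: "G0 \<subseteq> G" if "G \<in> C" for G using CA that unfolding A_def by blast
    obtain G1 where G1: "G1 \<in> C" using C(1) by blast
    have "subspace (\<Union>C)"
      unfolding subspace_def
    proof (intro conjI ballI allI)
      show "0 \<in> \<Union>C" using G1 sC[OF G1] subspace_0 by blast
    next
      fix x y assume "x \<in> \<Union>C" "y \<in> \<Union>C"
      then obtain X Y where "X\<in>C" "Y\<in>C" "x\<in>X" "y\<in>Y" by blast
      then obtain Z where "Z\<in>C" "x\<in>Z" "y\<in>Z" using two by blast
      thus "x + y \<in> \<Union>C" using sC subspace_add by blast
    next
      fix c x assume "x \<in> \<Union>C"
      then obtain X where "X\<in>C" "x\<in>X" by blast
      thus "c *\<^sub>R x \<in> \<Union>C" using sC subspace_scale by blast
    qed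
    moreover have "\<forall>x a b. (x,a)\<in>\<Union>C \<longrightarrow> (x,b)\<in>\<Union>C \<longrightarrow> a=b"
    proof (intro allI impI)
      fix x a b assume "(x,a)\<in>\<Union>C" "(x,b)\<in>\<Union>C"
      then obtain X Y where "X\<in>C" "Y\<in>C" "(x,a)\<in>X" "(x,b)\<in>Y" by blast
      then obtain Z where "Z\<in>C" "(x,a)\<in>Z" "(x,b)\<in>Z" using two by blast
      thus "a = b" using fC by blast
    qed
    moreover have "\<forall>x a. (x,a)\<in>\<Union>C \<longrightarrow> a \<le> p x" using pC by blast
    moreover have "G0 \<subseteq> \<Union>C" using gC G1 by blast
    ultimately show ?thesis unfolding A_def by blast
  qed
  obtain M where MA: "M \<in> A" and Mmax: "\<And>X. X \<in> A \<Longrightarrow> M \<subseteq> X \<Longrightarrow> X = M"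
    using subset_Zorn_nonempty[OF ne ch] by blast
  have Ms: "subspace M" and Mf: "\<And>x a b. (x,a)\<in>M \<Longrightarrow> (x,b)\<in>M \<Longrightarrow> a=b"
    and Mp: "\<And>x a. (x,a)\<in>M \<Longrightarrow> a \<le> p x" and MG: "G0 \<subseteq> M"
    using MA unfolding A_def by blast+
  have Madd: "(x+y, a+b) \<in> M" if "(x,a)\<in>M" "(y,b)\<in>M" for x y a b
    using subspace_add[OF Ms that] by simp
  have Mscale: "(c *\<^sub>R x, c*a) \<in> M" if "(x,a)\<in>M" for x a c
    using subspace_scale[OF Ms that, of c] by simp
  have M0: "(0,0) \<in> M" using subspace_0[OF Ms] by (simp add: zero_prod_def)
  have total: "\<exists>a. (x0,a) \<in> M" for x0
  proof (rule ccontr)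
    assume nx: "\<nexists>a. (x0,a) \<in> M"
    define Sx where "Sx = {a - p (y - x0) | y a. (y,a) \<in> M}"
    define c where "c = Sup Sx"
    have up: "a - p (y - x0) \<le> p (z + x0) - b" if "(y,a)\<in>M" "(z,b)\<in>M" for y a z b
    proof -
      have "a + b \<le> p (y + z)" using Mp[OF Madd[OF that]] .
      also have "\<dots> \<le> p (y - x0) + p (z + x0)" using sub[of "y - x0" "z + x0"] by simp
      finally show ?thesis by simp
    qed
    have Sne: "Sx \<noteq> {}" using M0 unfolding Sx_def by blast
    have Sbdd: "bdd_above Sx" unfolding Sx_def bdd_above_def using up M0 by blast
    have c1: "a - p (y - x0) \<le> c" if "(y,a)\<in>M" for y a
      unfolding c_def by (rule cSup_upper[OF _ Sbdd]) (use that in \<open>auto simp: Sx_def\<close>)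
    have c2: "c \<le> p (z + x0) - b" if "(z,b)\<in>M" for z b
      unfolding c_def by (rule cSup_least[OF Sne]) (use up that in \<open>auto simp: Sx_def\<close>)
    define M' where "M' = {(y + t *\<^sub>R x0, a + t * c) | y a t. (y,a) \<in> M}"
    have MM': "M \<subseteq> M'"
    proof
      fix q assume "q \<in> M"
      then obtain y a where "q = (y,a)" "(y,a)\<in>M" by (cases q) auto
      moreover have "q = (y + 0 *\<^sub>R x0, a + 0 * c)" using \<open>q = (y,a)\<close> by simp
      ultimately show "q \<in> M'" unfolding M'_def by blast
    qed
    have "(x0, c) = (0 + 1 *\<^sub>R x0, 0 + 1 * c)" by simp
    hence "(x0, c) \<in> M'" unfolding M'_def using M0 by blast
    hence neq: "M' \<noteq> M" using nx by blast
    have "subspace M'"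
      unfolding subspace_def
    proof (intro conjI ballI allI)
      have "(0::'b\<times>real) = (0 + 0 *\<^sub>R x0, 0 + 0 * c)" by (simp add: zero_prod_def)
      thus "0 \<in> M'" unfolding M'_def using M0 by blast
    next
      fix q r assume "q \<in> M'" "r \<in> M'"
      then obtain y a t z b s where q: "q = (y + t *\<^sub>R x0, a + t * c)" "(y,a)\<in>M"
        and r: "r = (z + s *\<^sub>R x0, b + s * c)" "(z,b)\<in>M" unfolding M'_def by blast
      have "q + r = ((y+z) + (t+s) *\<^sub>R x0, (a+b) + (t+s)*c)" using q r by (simp add: algebra_simps)
      thus "q + r \<in> M'" unfolding M'_def using Madd[OF q(2) r(2)] by blast
    next
      fix d q assume "q \<in> M'"
      then obtain y a t where q: "q = (y + t *\<^sub>R x0, a + t * c)" "(y,a)\<in>M" unfolding M'_def by blast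
      have "d *\<^sub>R q = (d *\<^sub>R y + (d*t) *\<^sub>R x0, d*a + (d*t)*c)" using q by (simp add: algebra_simps)
      thus "d *\<^sub>R q \<in> M'" unfolding M'_def using Mscale[OF q(2)] by blast
    qed
    moreover have "\<forall>x a b. (x,a)\<in>M' \<longrightarrow> (x,b)\<in>M' \<longrightarrow> a=b"
    proof (intro allI impI)
      fix x a' b' assume "(x,a')\<in>M'" "(x,b')\<in>M'"
      then obtain y a t z b s where q: "x = y + t *\<^sub>R x0" "a' = a + t * c" "(y,a)\<in>M"
        and r: "x = z + s *\<^sub>R x0" "b' = b + s * c" "(z,b)\<in>M" unfolding M'_def by blast
      have ts: "t = s"
      proof (rule ccontr)
        assume "t \<noteq> s"
        have "(inverse (s - t)) *\<^sub>R (y - z) = x0"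
        proof -
          have "y - z = (s - t) *\<^sub>R x0" using q(1) r(1) by (simp add: algebra_simps)
          thus ?thesis using \<open>t \<noteq> s\<close> by simp
        qed
        moreover have "(inverse (s - t) *\<^sub>R (y - z), inverse (s-t) * (a - b)) \<in> M"
          using Mscale[OF Madd[OF q(3) Mscale[OF r(3), of "-1"]], of "inverse (s - t)"]
          by (simp add: algebra_simps)
        ultimately show False using nx by metis
      qed
      hence "y = z" using q(1) r(1) by simp
      hence "a = b" using Mf q(3) r(3) by blast
      thus "a' = b'" using q r ts by simp
    qed
    moreover have "\<forall>x a. (x,a)\<in>M' \<longrightarrow> a \<le> p x"
    proof (intro allI impI)
      fix x a' assume "(x,a')\<in>M'"
      then obtain y a t where q: "x = y + t *\<^sub>R x0" "a' = a + t * c" "(y,a)\<in>M" unfolding M'_def by blast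
      consider "t = 0" | "t > 0" | "t < 0" by linarith
      thus "a' \<le> p x"
      proof cases
        case 1 thus ?thesis using q Mp by simp
      next
        case 2
        have "c \<le> p (inverse t *\<^sub>R y + x0) - inverse t * a" using c2[OF Mscale[OF q(3)]] .
        hence "t * c \<le> t * p (inverse t *\<^sub>R y + x0) - a" by (rule aux1[OF 2])
        also have "t * p (inverse t *\<^sub>R y + x0) = p (t *\<^sub>R (inverse t *\<^sub>R y + x0))" using hom 2 by simp
        also have "t *\<^sub>R (inverse t *\<^sub>R y + x0) = x" using 2 q(1) by (simp add: algebra_simps)
        finally show ?thesis using q(2) by simp
      next
        case 3
        define s where "s = - t"
        have s: "s > 0" using 3 s_def by simp
        have "inverse s * a - p (inverse s *\<^sub>R y - x0) \<le> c" using c1[OF Mscale[OF q(3)]] .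
        hence "a - s * p (inverse s *\<^sub>R y - x0) \<le> s * c" by (rule aux2[OF s])
        also have "s * p (inverse s *\<^sub>R y - x0) = p (s *\<^sub>R (inverse s *\<^sub>R y - x0))" using hom s by simp
        also have "s *\<^sub>R (inverse s *\<^sub>R y - x0) = x" using s q(1) s_def by (simp add: algebra_simps)
        finally show ?thesis using q(2) s_def by simp
      qed
    qed
    moreover have "G0 \<subseteq> M'" using MG MM' by blast
    ultimately have "M' \<in> A" unfolding A_def by blast
    from Mmax[OF this MM'] neq show False by blast
  qed
  define F where "F x = (THE a. (x,a) \<in> M)" for x
  have FM: "(x, F x) \<in> M" for x
  proof -
    obtain a where a: "(x,a)\<in>M" using total by blast
    have "F x = a" unfolding F_def using a Mf by blast
    thus ?thesis using a by simp
  qed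
  have Fu: "F x = a" if "(x,a)\<in>M" for x a using Mf[OF that FM] by simp
  have "linear F"
  proof (rule linearI)
    fix x y show "F (x + y) = F x + F y" using Fu[OF Madd[OF FM FM]] .
  next
    fix c x show "F (c *\<^sub>R x) = c *\<^sub>R F x" using Fu[OF Mscale[OF FM]] by simp
  qed
  moreover have "\<forall>x a. (x,a)\<in>G0 \<longrightarrow> F x = a" using Fu MG by blast
  moreover have "\<forall>x. F x \<le> p x" using Mp FM by blast
  ultimately show ?thesis by blast
qed


lemma KL:
  fixes M :: "'b::{real_vector,topological_space} set"
  assumes lc: "lc_tvs TYPE('b)" and Ms: "subspace M" and Mc: "closed M" and w: "w \<notin> M"
  shows "\<exists>h. dual_elem h \<and> (\<forall>m\<in>M. h m = 0) \<and> h w = 1"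
proof -
  have lcs: "\<And>U::'b set. open U \<Longrightarrow> 0 \<in> U \<Longrightarrow> (\<exists>V. open V \<and> convex V \<and> 0 \<in> V \<and> V \<subseteq> U)"
    using lc unfolding lc_tvs_def by blast
  have cid: "continuous_on UNIV (\<lambda>x::'b. x)" by (rule continuous_on_id)
  define U where "U = (\<lambda>x. x - w) -` (- M)"
  have "open U" unfolding U_def
    by (rule open_vimage_UNIV) (use Mc lc_diff[OF lc cid continuous_on_const] in auto)
  moreover have "0 \<in> U"
  proof -
    have "- w \<notin> M" using w subspace_neg[OF Ms, of "-w"] by auto
    thus ?thesis unfolding U_def by simp
  qed
  ultimately obtain V where V: "open V" "convex V" "0 \<in> V" "V \<subseteq> U" using lcs by blast
  have star: "s *\<^sub>R y \<in> V" if "0 \<le> s" "s \<le> 1" "y \<in> V" for s y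
    using convexD[OF V(2) that(3) V(3), of s "1 - s"] that by simp
  define T where "T x = {t. 0 < t \<and> inverse t *\<^sub>R x \<in> V}" for x
  define p where "p x = Inf (T x)" for x
  have absorb: "T x \<noteq> {}" for x
  proof -
    have "continuous_on UNIV (\<lambda>s::real. s *\<^sub>R x)"
      by (rule lc_scale[OF lc continuous_on_id continuous_on_const])
    hence "open ((\<lambda>s::real. s *\<^sub>R x) -` V)" by (rule open_vimage_UNIV[OF V(1)])
    moreover have "(0::real) \<in> (\<lambda>s::real. s *\<^sub>R x) -` V" using V(3) by simp
    ultimately obtain e where e: "e > 0" "ball 0 e \<subseteq> (\<lambda>s::real. s *\<^sub>R x) -` V"
      using open_contains_ball by blast
    have "e/2 \<in> ball 0 e" using e by simp
    hence "(e/2) *\<^sub>R x \<in> V" using e by blast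
    hence "inverse (e/2) \<in> T x" unfolding T_def using e by simp
    thus ?thesis by blast
  qed
  have bdd: "bdd_below (T x)" for x unfolding T_def bdd_below_def by (rule exI[of _ 0]) auto
  have p_nonneg: "0 \<le> p x" for x unfolding p_def
    by (rule cInf_greatest[OF absorb]) (auto simp: T_def)
  have p_le: "p x \<le> t" if "t \<in> T x" for x t unfolding p_def using cInf_lower[OF that bdd] .
  have p_lt: "inverse r *\<^sub>R x \<in> V" if "p x < r" for x r
  proof -
    have "\<exists>t\<in>T x. t < r" using that cInf_less_iff[OF absorb bdd, of x r] unfolding p_def by simp
    then obtain t where t: "t \<in> T x" "t < r" by blast
    have t0: "0 < t" "inverse t *\<^sub>R x \<in> V" using t(1) unfolding T_def by auto
    have r0: "r > 0" using t(2) t0(1) by linarith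
    have tr: "0 \<le> t / r" "t / r \<le> 1" using t0(1) r0 t(2) by simp_all
    have inV: "(t / r) *\<^sub>R (inverse t *\<^sub>R x) \<in> V" by (rule star[OF tr t0(2)])
    have tri: "(t / r) * inverse t = inverse r" using t0 r0 by (simp add: field_simps)
    from tri have eqq: "(t / r) *\<^sub>R (inverse t *\<^sub>R x) = inverse r *\<^sub>R x" by (simp only: scaleR_scaleR)
    from inV eqq show ?thesis by metis
  qed
  have p_V: "p x \<le> 1" if "x \<in> V" for x using p_le[of 1 x] that unfolding T_def by simp
  have sub: "p (x + y) \<le> p x + p y" for x y
  proof (rule field_le_epsilon)
    fix e :: real assume e: "e > 0"
    define r where "r = p x + e/2"
    define s where "s = p y + e/2"
    have r0: "r > 0" "s > 0" using p_nonneg[of x] p_nonneg[of y] e unfolding r_def s_def by simp_all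
    have xr: "inverse r *\<^sub>R x \<in> V" by (rule p_lt) (simp add: r_def e)
    have ys: "inverse s *\<^sub>R y \<in> V" by (rule p_lt) (simp add: s_def e)
    have q1: "0 \<le> r/(r+s)" "0 \<le> s/(r+s)" using r0 by simp_all
    have q2: "r/(r+s) + s/(r+s) = 1" using r0 by (simp add: add_divide_distrib[symmetric])
    have inV: "(r/(r+s)) *\<^sub>R (inverse r *\<^sub>R x) + (s/(r+s)) *\<^sub>R (inverse s *\<^sub>R y) \<in> V"
      by (rule convexD[OF V(2) xr ys q1 q2])
    have q3: "r/(r+s) * inverse r = inverse (r+s)" "s/(r+s) * inverse s = inverse (r+s)"
      using r0 by (simp_all add: field_simps)
    have eqq: "(r/(r+s)) *\<^sub>R (inverse r *\<^sub>R x) + (s/(r+s)) *\<^sub>R (inverse s *\<^sub>R y) = inverse (r+s) *\<^sub>R (x+y)"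
      by (simp only: scaleR_scaleR q3 scaleR_add_right)
    have "inverse (r+s) *\<^sub>R (x+y) \<in> V" using inV eqq by metis
    hence "r + s \<in> T (x+y)" unfolding T_def using r0 by simp
    hence "p (x+y) \<le> r + s" by (rule p_le)
    thus "p (x+y) \<le> p x + p y + e" unfolding r_def s_def by simp
  qed
  have homle: "p (c *\<^sub>R x) \<le> c * p x" if c: "c > 0" for c x
  proof (rule field_le_epsilon)
    fix e :: real assume e: "e > 0"
    define r where "r = p x + e/c"
    have "e / c > 0" using e c by simp
    hence r0: "r > 0" using p_nonneg[of x] unfolding r_def by linarith
    have xr: "inverse r *\<^sub>R x \<in> V" by (rule p_lt) (simp add: r_def e c)
    have "inverse (c*r) * c = inverse r" using c by simp
    hence "inverse (c*r) *\<^sub>R (c *\<^sub>R x) = inverse r *\<^sub>R x" by (simp only: scaleR_scaleR)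
    hence "inverse (c*r) *\<^sub>R (c *\<^sub>R x) \<in> V" using xr by metis
    hence "c * r \<in> T (c *\<^sub>R x)" unfolding T_def using mult_pos_pos[OF c r0] by blast
    hence "p (c *\<^sub>R x) \<le> c * r" by (rule p_le)
    moreover have "c * r = c * p x + e" unfolding r_def using c by (simp add: distrib_left)
    ultimately show "p (c *\<^sub>R x) \<le> c * p x + e" by linarith
  qed
  have hom: "p (c *\<^sub>R x) = c * p x" if c: "c > 0" for c x
  proof -
    have "p x = p (inverse c *\<^sub>R (c *\<^sub>R x))" using c by simp
    also have "\<dots> \<le> inverse c * p (c *\<^sub>R x)" by (rule homle) (simp add: c)
    finally have "c * p x \<le> p (c *\<^sub>R x)" using c by (simp add: field_simps)
    thus ?thesis using homle[OF c, of x] by simp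
  qed
  have pw: "1 \<le> p (w + m)" if "m \<in> M" for m
  proof (rule ccontr)
    assume "\<not> 1 \<le> p (w + m)"
    hence "inverse 1 *\<^sub>R (w + m) \<in> V" by (intro p_lt) simp
    hence "w + m \<in> U" using V(4) by auto
    thus False using that unfolding U_def by simp
  qed
  define G0 where "G0 = {(m + t *\<^sub>R w, t) | m t. m \<in> M}"
  have G0s: "subspace G0"
    unfolding subspace_def
  proof (intro conjI ballI allI)
    have "(0::'b \<times> real) = (0 + 0 *\<^sub>R w, 0)" by (simp add: zero_prod_def)
    thus "0 \<in> G0" unfolding G0_def using subspace_0[OF Ms] by blast
  next
    fix q r assume "q \<in> G0" "r \<in> G0"
    then obtain m t n s where q: "q = (m + t *\<^sub>R w, t)" "m \<in> M" and r: "r = (n + s *\<^sub>R w, s)" "n \<in> M"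
      unfolding G0_def by blast
    have "q + r = ((m + n) + (t + s) *\<^sub>R w, t + s)" using q r by (simp add: algebra_simps)
    thus "q + r \<in> G0" unfolding G0_def using subspace_add[OF Ms q(2) r(2)] by blast
  next
    fix c q assume "q \<in> G0"
    then obtain m t where q: "q = (m + t *\<^sub>R w, t)" "m \<in> M" unfolding G0_def by blast
    have "c *\<^sub>R q = (c *\<^sub>R m + (c * t) *\<^sub>R w, c * t)" using q by (simp add: algebra_simps)
    thus "c *\<^sub>R q \<in> G0" unfolding G0_def using subspace_scale[OF Ms q(2)] by blast
  qed
  have G0f: "a = b" if ab_in: "(x,a)\<in>G0" "(x,b)\<in>G0" for x a b
  proof (rule ccontr)
    assume ab: "a \<noteq> b"
    obtain m n where mn: "x = m + a *\<^sub>R w" "m \<in> M" "x = n + b *\<^sub>R w" "n \<in> M"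
      using ab_in unfolding G0_def by blast
    have "(a - b) *\<^sub>R w = n - m" using mn by (simp add: algebra_simps)
    hence "inverse (a - b) *\<^sub>R ((a - b) *\<^sub>R w) = inverse (a - b) *\<^sub>R (n - m)" by simp
    moreover have "inverse (a - b) *\<^sub>R ((a - b) *\<^sub>R w) = w" using ab by simp
    ultimately have "w = inverse (a - b) *\<^sub>R (n - m)" by simp
    moreover have "inverse (a - b) *\<^sub>R (n - m) \<in> M"
      using subspace_scale[OF Ms subspace_diff[OF Ms mn(4) mn(2)]] by blast
    ultimately show False using w by simp
  qed
  have G0p: "a \<le> p x" if xa_in: "(x,a)\<in>G0" for x a
  proof -
    obtain m where m: "x = m + a *\<^sub>R w" "m \<in> M" using xa_in unfolding G0_def by blast
    show ?thesis
    proof (cases "a > 0")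
      case True
      have "x = a *\<^sub>R (w + inverse a *\<^sub>R m)" using m True by (simp add: algebra_simps)
      hence "p x = a * p (w + inverse a *\<^sub>R m)" using hom True by simp
      moreover have "1 \<le> p (w + inverse a *\<^sub>R m)" using pw subspace_scale[OF Ms m(2)] by blast
      ultimately show ?thesis using True by simp
    next
      case False thus ?thesis using p_nonneg[of x] by simp
    qed
  qed
  obtain F where F: "linear F" "\<And>x a. (x,a)\<in>G0 \<Longrightarrow> F x = a" "\<And>x. F x \<le> p x"
  proof -
    have "\<exists>F. linear F \<and> (\<forall>x a. (x,a)\<in>G0 \<longrightarrow> F x = a) \<and> (\<forall>x. F x \<le> p x)"
      apply (rule hb_graph[of p G0])
          apply (rule sub)
         apply (erule hom)
        apply (rule G0s)
       apply (erule (1) G0f)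
      apply (erule G0p)
      done
    thus ?thesis using that by blast
  qed
  have Fm: "F m = 0" if "m \<in> M" for m
  proof -
    have "(m + 0 *\<^sub>R w, 0) \<in> G0" unfolding G0_def using that by blast
    thus ?thesis using F(2) by simp
  qed
  have Fw: "F w = 1"
  proof -
    have "(0 + 1 *\<^sub>R w, 1) \<in> G0" unfolding G0_def using subspace_0[OF Ms] by blast
    thus ?thesis using F(2) by simp
  qed
  define W where "W = V \<inter> uminus -` V"
  have cneg: "continuous_on UNIV (\<lambda>x::'b. - x)"
    using lc_scale[OF lc continuous_on_const[of UNIV "-1::real"] cid] by simp
  have Wo: "open W" unfolding W_def using open_vimage_UNIV[OF V(1) cneg] V(1) by (auto simp: vimage_def)
  have W0: "0 \<in> W" unfolding W_def using V(3) by simp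
  have FW: "\<bar>F y\<bar> \<le> 1" if "y \<in> W" for y
  proof -
    have "F y \<le> 1" using F(3)[of y] p_V[of y] that unfolding W_def by simp
    moreover have "F (- y) \<le> 1" using F(3)[of "-y"] p_V[of "-y"] that unfolding W_def by simp
    moreover have "F (- y) = - F y" using linear_neg[OF F(1)] .
    ultimately show ?thesis by simp
  qed
  have "continuous_on UNIV F"
    unfolding continuous_on_topological
  proof (intro ballI allI impI)
    fix x B assume B: "open B" "F x \<in> B"
    obtain e where e: "e > 0" "ball (F x) e \<subseteq> B" using B open_contains_ball by blast
    define A where "A = (\<lambda>y. (2/e) *\<^sub>R (y - x)) -` W"
    have "continuous_on UNIV (\<lambda>y. (2/e) *\<^sub>R (y - x))"
      by (rule lc_scale[OF lc continuous_on_const lc_diff[OF lc cid continuous_on_const]])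
    hence "open A" unfolding A_def by (rule open_vimage_UNIV[OF Wo])
    moreover have "x \<in> A" unfolding A_def using W0 by simp
    moreover have "F y \<in> B" if "y \<in> A" for y
    proof -
      have "\<bar>F ((2/e) *\<^sub>R (y - x))\<bar> \<le> 1" using FW that unfolding A_def by simp
      moreover have "F ((2/e) *\<^sub>R (y - x)) = (2/e) * (F y - F x)"
        using linear_scale[OF F(1)] linear_diff[OF F(1)] by simp
      ultimately have h: "\<bar>(2/e) * (F y - F x)\<bar> \<le> 1" by metis
      have "(e/2) * \<bar>(2/e) * (F y - F x)\<bar> = (e/2) * ((2/e) * \<bar>F y - F x\<bar>)" using e by (simp only: abs_mult) simp
      also have "\<dots> = \<bar>F y - F x\<bar>" using e by simp
      finally have "\<bar>F y - F x\<bar> = (e/2) * \<bar>(2/e) * (F y - F x)\<bar>" by simp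
      also have "\<dots> \<le> (e/2) * 1" by (rule mult_left_mono[OF h]) (use e in simp)
      finally have "\<bar>F y - F x\<bar> \<le> e/2" by simp
      hence "dist (F x) (F y) < e" using e by (simp add: dist_real_def abs_minus_commute)
      thus ?thesis using e by auto
    qed
    ultimately show "\<exists>A. open A \<and> x \<in> A \<and> (\<forall>y\<in>UNIV. y \<in> A \<longrightarrow> F y \<in> B)" by blast
  qed
  hence "dual_elem F" unfolding dual_elem_def using F(1) by blast
  thus ?thesis using Fm Fw by blast
qed



lemma dual_comb:
  assumes "dual_elem g" "dual_elem g'"
  shows "dual_elem (\<lambda>x. a * g x + b * g' x)"
proof -
  have l: "linear g" "linear g'" and c: "continuous_on UNIV g" "continuous_on UNIV g'"
    using assms unfolding dual_elem_def by blast+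
  have "linear (\<lambda>x. a * g x + b * g' x)"
    by (rule linearI) (simp_all add: linear_add[OF l(1)] linear_add[OF l(2)] linear_scale[OF l(1)]
        linear_scale[OF l(2)] algebra_simps)
  moreover have "continuous_on UNIV (\<lambda>x. a * g x + b * g' x)"
    by (intro continuous_intros c)
  ultimately show ?thesis unfolding dual_elem_def by blast
qed

lemma pc_step:
  fixes K :: "'b::{real_vector,topological_space} set"
  assumes lc: "lc_tvs TYPE('b)"
    and Gf: "finite G" and Gd: "\<forall>g\<in>G. dual_elem g" and Lc: "closed L" and Ls: "subspace L"
    and K: "K = {x\<in>L. \<forall>g\<in>G. g x \<le> 0}"
  shows "\<exists>G' L'. finite G' \<and> (\<forall>g\<in>G'. dual_elem g) \<and> closed L' \<and> subspace L' \<and>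
       {x + t *\<^sub>R w | x t. x \<in> K \<and> t \<ge> 0} = {x\<in>L'. \<forall>g\<in>G'. g x \<le> 0}"
proof (cases "w \<in> L")
  case True
  have lin: "linear g" if "g \<in> G" for g using Gd that unfolding dual_elem_def by blast
  define Q where "Q = {(g,g'). g\<in>G \<and> g'\<in>G \<and> g w > 0 \<and> g' w < 0}"
  define comb where "comb = (\<lambda>(g::'b\<Rightarrow>real,g'::'b\<Rightarrow>real). (\<lambda>x. (- g' w) * g x + g w * g' x))"
  define G' where "G' = {g\<in>G. g w \<le> 0} \<union> comb ` Q"
  have "finite Q" unfolding Q_def by (rule finite_subset[of _ "G \<times> G"]) (use Gf in auto)
  hence fG': "finite G'" unfolding G'_def using Gf by simp
  have dG': "\<forall>g\<in>G'. dual_elem g"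
  proof
    fix g assume "g \<in> G'"
    then consider "g \<in> G" | g1 g2 where "g1 \<in> G" "g2 \<in> G" "g = comb (g1,g2)"
      unfolding G'_def Q_def by fastforce
    thus "dual_elem g"
    proof cases
      case 1 thus ?thesis using Gd by blast
    next
      case 2
      have "dual_elem (\<lambda>x. (- g2 w) * g1 x + g1 w * g2 x)" by (rule dual_comb) (use Gd 2 in blast)+
      thus ?thesis using 2 unfolding comb_def by simp
    qed
  qed
  have eq: "{x + t *\<^sub>R w | x t. x \<in> K \<and> t \<ge> 0} = {x\<in>L. \<forall>g\<in>G'. g x \<le> 0}"
  proof (intro set_eqI iffI)
    fix z assume "z \<in> {x + t *\<^sub>R w | x t. x \<in> K \<and> t \<ge> 0}"
    then obtain x t where z: "z = x + t *\<^sub>R w" "x \<in> L" "\<forall>g\<in>G. g x \<le> 0" "t \<ge> 0" using K by blast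
    have "z \<in> L" using z True subspace_add subspace_scale Ls by blast
    moreover have "g z \<le> 0" if "g \<in> G'" for g
    proof -
      from that consider "g \<in> G" "g w \<le> 0" | g1 g2 where "(g1,g2) \<in> Q" "g = comb (g1,g2)"
        unfolding G'_def by fastforce
      thus ?thesis
      proof cases
        case 1
        have "g z = g x + t * g w" using z(1) linear_add[OF lin[OF 1(1)]] linear_scale[OF lin[OF 1(1)]] by simp
        moreover have "t * g w \<le> 0" using z(4) 1(2) by (simp add: mult_nonneg_nonpos)
        moreover have "g x \<le> 0" using z(3) 1(1) by blast
        ultimately show ?thesis by linarith
      next
        case 2
        have g12: "g1 \<in> G" "g2 \<in> G" "g1 w > 0" "g2 w < 0" using 2(1) unfolding Q_def by auto
        have e1: "g1 z = g1 x + t * g1 w" using z(1) linear_add[OF lin[OF g12(1)]] linear_scale[OF lin[OF g12(1)]] by simp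
        have e2: "g2 z = g2 x + t * g2 w" using z(1) linear_add[OF lin[OF g12(2)]] linear_scale[OF lin[OF g12(2)]] by simp
        have "g z = (- g2 w) * g1 x + g1 w * g2 x" unfolding 2(2) comb_def using e1 e2 by (simp add: algebra_simps)
        moreover have "g1 x \<le> 0" "g2 x \<le> 0" using g12 z(3) by blast+
        hence "(- g2 w) * g1 x \<le> 0" "g1 w * g2 x \<le> 0" using g12
          by (simp_all add: mult_nonneg_nonpos mult_nonpos_nonpos less_imp_le)
        ultimately show ?thesis by simp
      qed
    qed
    ultimately show "z \<in> {x\<in>L. \<forall>g\<in>G'. g x \<le> 0}" by blast
  next
    fix x assume "x \<in> {x\<in>L. \<forall>g\<in>G'. g x \<le> 0}"
    hence xL: "x \<in> L" and xg: "\<And>g. g \<in> G' \<Longrightarrow> g x \<le> 0" by auto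
    define P where "P = {g\<in>G. g w > 0}"
    define S where "S = insert 0 ((\<lambda>g. g x / g w) ` P)"
    define t where "t = Max S"
    have fS: "finite S" unfolding S_def P_def using Gf by simp
    have t0: "t \<ge> 0" unfolding t_def S_def by (rule Max_ge) (use fS S_def in auto)
    have tin: "t \<in> S" unfolding t_def by (rule Max_in[OF fS]) (simp add: S_def)
    have bound: "g x - t * g w \<le> 0" if gG: "g \<in> G" for g
    proof (cases "g w > 0")
      case True
      have "g x / g w \<le> t" unfolding t_def by (rule Max_ge[OF fS]) (use gG True in \<open>auto simp: S_def P_def\<close>)
      hence "g x \<le> t * g w" using True by (simp add: pos_divide_le_eq)
      thus ?thesis by simp
    next
      case False
      hence gle: "g w \<le> 0" by simp
      hence gx: "g x \<le> 0" using xg gG unfolding G'_def by blast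
      show ?thesis
      proof (cases "g w = 0")
        case True thus ?thesis using gx by simp
      next
        case False
        hence gneg: "g w < 0" using gle by simp
        show ?thesis
        proof (cases "t = 0")
          case True thus ?thesis using gx by simp
        next
          case False
          then obtain g0 where g0: "g0 \<in> P" "t = g0 x / g0 w" using tin unfolding S_def by auto
          have g0G: "g0 \<in> G" "g0 w > 0" using g0(1) unfolding P_def by auto
          have "(g0, g) \<in> Q" unfolding Q_def using g0G gG gneg by simp
          hence "comb (g0,g) \<in> G'" unfolding G'_def by blast
          hence "(- g w) * g0 x + g0 w * g x \<le> 0" using xg unfolding comb_def by fastforce
          hence "g x * g0 w \<le> g0 x * g w" by (simp add: algebra_simps)
          hence "g x \<le> (g0 x * g w) / g0 w" using g0G(2) by (simp add: pos_le_divide_eq)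
          also have "\<dots> = t * g w" using g0(2) by simp
          finally show ?thesis by simp
        qed
      qed
    qed
    define y where "y = x - t *\<^sub>R w"
    have "y \<in> L" unfolding y_def using xL True Ls subspace_diff subspace_scale by blast
    moreover have "g y \<le> 0" if "g \<in> G" for g
      using bound[OF that] linear_diff[OF lin[OF that]] linear_scale[OF lin[OF that]] unfolding y_def by simp
    ultimately have "y \<in> K" using K by blast
    moreover have "x = y + t *\<^sub>R w" unfolding y_def by simp
    ultimately show "x \<in> {x + t *\<^sub>R w | x t. x \<in> K \<and> t \<ge> 0}" using t0 by blast
  qed
  show ?thesis using fG' dG' Lc Ls eq by blast
next
  case False
  obtain h where h: "dual_elem h" "\<And>m. m \<in> L \<Longrightarrow> h m = 0" "h w = 1"
    using KL[OF lc Ls Lc False] by blast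
  have hl: "linear h" and hc: "continuous_on UNIV h" using h(1) unfolding dual_elem_def by blast+
  define \<phi> where "\<phi> x = x - h x *\<^sub>R w" for x
  have \<phi>c: "continuous_on UNIV \<phi>" unfolding \<phi>_def
    by (rule lc_diff[OF lc continuous_on_id lc_scale[OF lc hc continuous_on_const]])
  have \<phi>l: "linear \<phi>" unfolding \<phi>_def
    by (rule linearI) (simp_all add: linear_add[OF hl] linear_scale[OF hl] algebra_simps)
  define L' where "L' = \<phi> -` L"
  define G' where "G' = (\<lambda>g. g \<circ> \<phi>) ` G \<union> {\<lambda>x. - h x}"
  have fG': "finite G'" unfolding G'_def using Gf by simp
  have dG': "\<forall>g\<in>G'. dual_elem g"
  proof
    fix g assume "g \<in> G'"
    then consider g0 where "g0 \<in> G" "g = g0 \<circ> \<phi>" | "g = (\<lambda>x. - h x)" unfolding G'_def by blast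
    thus "dual_elem g"
    proof cases
      case 1
      have "linear g0" "continuous_on UNIV g0" using Gd 1(1) unfolding dual_elem_def by blast+
      hence "linear (g0 \<circ> \<phi>)" "continuous_on UNIV (g0 \<circ> \<phi>)"
        using linear_compose[OF \<phi>l] continuous_on_compose2[OF _ \<phi>c, of UNIV g0] by (auto simp: o_def)
      thus ?thesis using 1 unfolding dual_elem_def by blast
    next
      case 2
      have "linear (\<lambda>x. - h x)" by (rule linearI) (simp_all add: linear_add[OF hl] linear_scale[OF hl])
      moreover have "continuous_on UNIV (\<lambda>x. - h x)" by (intro continuous_intros hc)
      ultimately show ?thesis using 2 unfolding dual_elem_def by blast
    qed
  qed
  have cL': "closed L'" unfolding L'_def by (rule closed_vimage_UNIV[OF Lc \<phi>c])
  have sL': "subspace L'" unfolding L'_def subspace_def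
    using subspace_0[OF Ls] subspace_add[OF Ls] subspace_scale[OF Ls]
      linear_0[OF \<phi>l] linear_add[OF \<phi>l] linear_scale[OF \<phi>l] by auto
  have eq: "{x + t *\<^sub>R w | x t. x \<in> K \<and> t \<ge> 0} = {x\<in>L'. \<forall>g\<in>G'. g x \<le> 0}"
  proof (intro set_eqI iffI)
    fix z assume "z \<in> {x + t *\<^sub>R w | x t. x \<in> K \<and> t \<ge> 0}"
    then obtain x t where z: "z = x + t *\<^sub>R w" "x \<in> L" "\<forall>g\<in>G. g x \<le> 0" "t \<ge> 0" using K by blast
    have hz: "h z = t" using z(1) h(2)[OF z(2)] h(3) linear_add[OF hl] linear_scale[OF hl] by simp
    have "\<phi> z = z - t *\<^sub>R w" unfolding \<phi>_def hz ..
    hence pz: "\<phi> z = x" using z(1) by simp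
    show "z \<in> {x\<in>L'. \<forall>g\<in>G'. g x \<le> 0}" unfolding L'_def G'_def using pz hz z by auto
  next
    fix z assume "z \<in> {x\<in>L'. \<forall>g\<in>G'. g x \<le> 0}"
    hence zL: "\<phi> z \<in> L" and zg: "\<And>g. g \<in> G \<Longrightarrow> g (\<phi> z) \<le> 0" and zh: "- h z \<le> 0"
      unfolding L'_def G'_def by auto
    have "\<phi> z \<in> K" using K zL zg by blast
    moreover have "z = \<phi> z + h z *\<^sub>R w" unfolding \<phi>_def by simp
    ultimately show "z \<in> {x + t *\<^sub>R w | x t. x \<in> K \<and> t \<ge> 0}" using zh by force
  qed
  show ?thesis using fG' dG' cL' sL' eq by blast
qed


definition cone_idx :: "'b::real_vector set \<Rightarrow> 'i set \<Rightarrow> ('i \<Rightarrow> 'b) \<Rightarrow> 'b set" where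
  "cone_idx Z N w = {(\<Sum>m\<in>N. c m *\<^sub>R w m) + z | c z. (\<forall>m\<in>N. c m \<ge> 0) \<and> z \<in> Z}"

lemma cone_idx_empty: "cone_idx Z {} w = Z"
  unfolding cone_idx_def by auto

lemma cone_idx_insert:
  assumes "finite N" "m \<notin> N"
  shows "cone_idx Z (insert m N) w = {x + t *\<^sub>R w m | x t. x \<in> cone_idx Z N w \<and> t \<ge> 0}"
proof (intro set_eqI iffI)
  fix y assume "y \<in> cone_idx Z (insert m N) w"
  then obtain c z where y: "y = (\<Sum>n\<in>insert m N. c n *\<^sub>R w n) + z" "\<forall>n\<in>insert m N. c n \<ge> 0" "z \<in> Z"
    unfolding cone_idx_def by blast
  have "y = ((\<Sum>n\<in>N. c n *\<^sub>R w n) + z) + c m *\<^sub>R w m" using y(1) assms by (simp add: algebra_simps)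
  moreover have "(\<Sum>n\<in>N. c n *\<^sub>R w n) + z \<in> cone_idx Z N w" unfolding cone_idx_def using y by blast
  ultimately show "y \<in> {x + t *\<^sub>R w m | x t. x \<in> cone_idx Z N w \<and> t \<ge> 0}" using y(2) by blast
next
  fix y assume "y \<in> {x + t *\<^sub>R w m | x t. x \<in> cone_idx Z N w \<and> t \<ge> 0}"
  then obtain c z t where y: "y = ((\<Sum>n\<in>N. c n *\<^sub>R w n) + z) + t *\<^sub>R w m" "\<forall>n\<in>N. c n \<ge> 0" "z \<in> Z" "t \<ge> 0"
    unfolding cone_idx_def by blast
  define c' where "c' = c(m := t)"
  have "(\<Sum>n\<in>N. c' n *\<^sub>R w n) = (\<Sum>n\<in>N. c n *\<^sub>R w n)"
    by (rule sum.cong) (use assms in \<open>auto simp: c'_def\<close>)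
  hence "y = (\<Sum>n\<in>insert m N. c' n *\<^sub>R w n) + z" using y(1) assms by (simp add: c'_def algebra_simps)
  moreover have "\<forall>n\<in>insert m N. c' n \<ge> 0" using y(2,4) by (simp add: c'_def)
  ultimately show "y \<in> cone_idx Z (insert m N) w" unfolding cone_idx_def using y(3) by blast
qed

lemma cone_pc:
  fixes Z :: "'b::{real_vector,topological_space} set"
  assumes lc: "lc_tvs TYPE('b)" and N: "finite N" and Zc: "closed Z" and Zs: "subspace Z"
  shows "\<exists>G L. finite G \<and> (\<forall>g\<in>G. dual_elem g) \<and> closed L \<and> subspace L \<and>
     cone_idx Z N w = {x\<in>L. \<forall>g\<in>G. g x \<le> 0}"
  using N
proof (induction N rule: finite_induct)
  case empty
  show ?case by (rule exI[of _ "{}"], rule exI[of _ Z]) (use Zc Zs in \<open>simp add: cone_idx_empty\<close>)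
next
  case (insert m N)
  then obtain G L where GL: "finite G" "\<forall>g\<in>G. dual_elem g" "closed L" "subspace L"
    "cone_idx Z N w = {x\<in>L. \<forall>g\<in>G. g x \<le> 0}" by blast
  show ?case unfolding cone_idx_insert[OF insert(1,2)]
    by (rule pc_step[OF lc GL])
qed

lemma zero_sub: "subspace (X0 \<times> {0::real})" if "subspace X0" for X0 :: "'a::real_vector set"
  using that unfolding subspace_def by (auto simp: zero_prod_def)

lemma sum_sumtype:
  fixes f :: "'x + 'y \<Rightarrow> 'b::comm_monoid_add"
  assumes "finite I" "finite J"
  shows "(\<Sum>m\<in>Inl ` I \<union> Inr ` J. f m) = (\<Sum>i\<in>I. f (Inl i)) + (\<Sum>j\<in>J. f (Inr j))"
proof -
  have "(\<Sum>m\<in>Inl ` I \<union> Inr ` J. f m) = (\<Sum>m\<in>Inl ` I. f m) + (\<Sum>m\<in>Inr ` J. f m)"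
    by (rule sum.union_disjoint) (use assms in auto)
  also have "(\<Sum>m\<in>Inl ` I. f m) = (\<Sum>i\<in>I. f (Inl i))" by (simp add: sum.reindex)
  also have "(\<Sum>m\<in>Inr ` J. f m) = (\<Sum>j\<in>J. f (Inr j))" by (simp add: sum.reindex)
  finally show ?thesis .
qed

lemma gen_set_slice:
  fixes u v :: "nat \<Rightarrow> 'a::real_vector"
  assumes I: "finite I" and J: "finite J"
  defines "w \<equiv> case_sum (\<lambda>i. (u i, 1::real)) (\<lambda>j. (v j, 0))"
  shows "x \<in> gen_set I u J v X0 \<longleftrightarrow> (x, 1) \<in> cone_idx (X0 \<times> {0}) (Inl ` I \<union> Inr ` J) w"
proof
  assume "x \<in> gen_set I u J v X0"
  then obtain lam mu z where x: "x = (\<Sum>i\<in>I. lam i *\<^sub>R u i) + (\<Sum>j\<in>J. mu j *\<^sub>R v j) + z"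
    "\<forall>i\<in>I. lam i \<ge> 0" "(\<Sum>i\<in>I. lam i) = 1" "\<forall>j\<in>J. mu j \<ge> 0" "z \<in> X0"
    unfolding gen_set_def by blast
  define c where "c = case_sum lam mu"
  have "(\<Sum>m\<in>Inl ` I \<union> Inr ` J. c m *\<^sub>R w m) = (\<Sum>i\<in>I. lam i *\<^sub>R (u i, 1)) + (\<Sum>j\<in>J. mu j *\<^sub>R (v j, 0))"
    by (subst sum_sumtype[OF I J]) (simp add: c_def w_def)
  also have "\<dots> = ((\<Sum>i\<in>I. lam i *\<^sub>R u i) + (\<Sum>j\<in>J. mu j *\<^sub>R v j), \<Sum>i\<in>I. lam i)"
    by (simp add: prod_eq_iff fst_sum snd_sum)
  finally have "(x,1) = (\<Sum>m\<in>Inl ` I \<union> Inr ` J. c m *\<^sub>R w m) + (z, 0)" using x(1,3) by simp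
  moreover have "\<forall>m\<in>Inl ` I \<union> Inr ` J. c m \<ge> 0" using x(2,4) by (auto simp: c_def)
  ultimately show "(x, 1) \<in> cone_idx (X0 \<times> {0}) (Inl ` I \<union> Inr ` J) w"
    unfolding cone_idx_def using x(5) by blast
next
  assume "(x, 1) \<in> cone_idx (X0 \<times> {0}) (Inl ` I \<union> Inr ` J) w"
  then obtain c z where c: "(x,1) = (\<Sum>m\<in>Inl ` I \<union> Inr ` J. c m *\<^sub>R w m) + z"
    "\<forall>m\<in>Inl ` I \<union> Inr ` J. c m \<ge> 0" "z \<in> X0 \<times> {0}"
    unfolding cone_idx_def by blast
  have "(\<Sum>m\<in>Inl ` I \<union> Inr ` J. c m *\<^sub>R w m) = (\<Sum>i\<in>I. c (Inl i) *\<^sub>R (u i, 1)) + (\<Sum>j\<in>J. c (Inr j) *\<^sub>R (v j, 0))"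
    by (subst sum_sumtype[OF I J]) (simp add: w_def)
  also have "\<dots> = ((\<Sum>i\<in>I. c (Inl i) *\<^sub>R u i) + (\<Sum>j\<in>J. c (Inr j) *\<^sub>R v j), \<Sum>i\<in>I. c (Inl i))"
    by (simp add: prod_eq_iff fst_sum snd_sum)
  finally have eq: "(x,1) = ((\<Sum>i\<in>I. c (Inl i) *\<^sub>R u i) + (\<Sum>j\<in>J. c (Inr j) *\<^sub>R v j) + fst z, (\<Sum>i\<in>I. c (Inl i)) + snd z)"
    using c(1) by (simp add: prod_eq_iff)
  have "snd z = 0" "fst z \<in> X0" using c(3) by auto
  hence "(\<Sum>i\<in>I. c (Inl i)) = 1" using eq by simp
  moreover have "x = (\<Sum>i\<in>I. c (Inl i) *\<^sub>R u i) + (\<Sum>j\<in>J. c (Inr j) *\<^sub>R v j) + fst z" using eq by simp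
  moreover have "\<forall>i\<in>I. c (Inl i) \<ge> 0" "\<forall>j\<in>J. c (Inr j) \<ge> 0" using c(2) by auto
  ultimately show "x \<in> gen_set I u J v X0" unfolding gen_set_def mem_Collect_eq
    by (intro exI[of _ "\<lambda>i. c (Inl i)"] exI[of _ "\<lambda>j. c (Inr j)"] exI[of _ "fst z"])
       (use \<open>fst z \<in> X0\<close> in simp)
qed


lemma gen_poly:
  fixes u v :: "nat \<Rightarrow> 'a::{real_vector,topological_space}"
  assumes lc: "lc_tvs TYPE('a)" and I: "finite I" and J: "finite J"
    and X0s: "subspace X0" and X0c: "closed X0"
  shows "gen_polyhedral (gen_set I u J v X0)"
proof -
  have lc2: "lc_tvs TYPE('a \<times> real)" by (rule lc_prod[OF lc])
  have Zc: "closed (X0 \<times> {0::real})" by (rule closed_Times[OF X0c closed_singleton])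
  have fN: "finite (Inl ` I \<union> Inr ` J)" using I J by simp
  have ex: "\<exists>G L. finite G \<and> (\<forall>g\<in>G. dual_elem g) \<and> closed L \<and> subspace L \<and>
     cone_idx (X0 \<times> {0}) (Inl ` I \<union> Inr ` J) (case_sum (\<lambda>i. (u i, 1::real)) (\<lambda>j. (v j, 0)))
       = {q\<in>L. \<forall>g\<in>G. g q \<le> 0}"
    by (rule cone_pc[OF lc2 fN Zc zero_sub[OF X0s]])
  then obtain G L where GL: "finite G" "\<forall>g\<in>G. dual_elem g" "closed L" "subspace L"
    "cone_idx (X0 \<times> {0}) (Inl ` I \<union> Inr ` J) (case_sum (\<lambda>i. (u i, 1::real)) (\<lambda>j. (v j, 0)))
       = {q\<in>L. \<forall>g\<in>G. g q \<le> 0}" by (elim exE conjE)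
  have Seq: "x \<in> gen_set I u J v X0 \<longleftrightarrow> (x,1) \<in> L \<and> (\<forall>g\<in>G. g (x,1) \<le> 0)" for x
    using gen_set_slice[OF I J, of x u v X0] GL(5) by simp
  obtain hh where bij: "bij_betw hh {1..card G} G" using ex_bij_betw_nat_finite_1[OF GL(1)] by blast
  have img: "hh ` {1..card G} = G" using bij by (simp add: bij_betw_def)
  define xs where "xs i = (\<lambda>x. hh i (x, 0::real))" for i
  define al where "al i = - hh i (0, 1::real)" for i
  define L1 where "L1 = (\<lambda>x. (x, 1::real)) -` L"
  have split: "g (x,1) = g (x,0) + g (0,1)" if "g \<in> G" for g and x :: 'a
  proof -
    have "linear g" using GL(2) that unfolding dual_elem_def by blast
    from linear_add[OF this, of "(x,0)" "(0,1)"] show ?thesis by simp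
  qed
  have dxs: "\<forall>i\<in>{1..card G}. dual_elem (xs i)"
  proof
    fix i assume "i \<in> {1..card G}"
    hence g: "hh i \<in> G" using img by blast
    have lg: "linear (hh i)" and cg: "continuous_on UNIV (hh i)"
      using GL(2) g unfolding dual_elem_def by blast+
    have "linear (xs i)" unfolding xs_def
    proof (rule linearI)
      fix x y :: 'a show "hh i (x + y, 0) = hh i (x, 0) + hh i (y, 0)"
        using linear_add[OF lg, of "(x,0)" "(y,0)"] by simp
    next
      fix c :: real and x :: 'a show "hh i (c *\<^sub>R x, 0) = c *\<^sub>R hh i (x, 0)"
        using linear_scale[OF lg, of c "(x,0)"] by simp
    qed
    moreover have "continuous_on UNIV (xs i)" unfolding xs_def
      by (rule continuous_on_compose2[OF cg, of UNIV "\<lambda>x. (x, 0::real)"]) (auto intro!: continuous_intros)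
    ultimately show "dual_elem (xs i)" unfolding dual_elem_def by blast
  qed
  have cL1: "closed L1" unfolding L1_def
    by (rule closed_vimage_UNIV[OF GL(3)]) (auto intro!: continuous_intros)
  have aL1: "affine L1" unfolding affine_def L1_def
  proof (intro ballI allI impI)
    fix x y :: 'a and a b :: real assume "x \<in> (\<lambda>x. (x, 1::real)) -` L" "y \<in> (\<lambda>x. (x, 1::real)) -` L" "a + b = 1"
    hence "(x, 1::real) \<in> L" "(y, 1::real) \<in> L" by auto
    hence "a *\<^sub>R (x, 1::real) + b *\<^sub>R (y, 1) \<in> L"
      by (intro subspace_add[OF GL(4)] subspace_scale[OF GL(4)])
    moreover have "a *\<^sub>R (x, 1::real) + b *\<^sub>R (y, 1) = (a *\<^sub>R x + b *\<^sub>R y, 1)" using \<open>a + b = 1\<close> by simp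
    ultimately show "a *\<^sub>R x + b *\<^sub>R y \<in> (\<lambda>x. (x, 1::real)) -` L" by simp
  qed
  have "gen_set I u J v X0 = {x \<in> L1. \<forall>i\<in>{1..card G}. xs i x \<le> al i}"
  proof (intro set_eqI)
    fix x
    have "(\<forall>g\<in>G. g (x,1) \<le> 0) \<longleftrightarrow> (\<forall>g\<in>hh ` {1..card G}. g (x,1) \<le> 0)" using img by simp
    also have "\<dots> \<longleftrightarrow> (\<forall>i\<in>{1..card G}. hh i (x,1) \<le> 0)" by simp
    also have "\<dots> \<longleftrightarrow> (\<forall>i\<in>{1..card G}. xs i x \<le> al i)"
    proof -
      have "hh i (x,1) \<le> 0 \<longleftrightarrow> xs i x \<le> al i" if "i \<in> {1..card G}" for i
      proof -
        have "hh i \<in> G" using img that by blast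
        hence "hh i (x,1) = hh i (x,0) + hh i (0,1)" by (rule split)
        thus ?thesis unfolding xs_def al_def by linarith
      qed
      thus ?thesis by blast
    qed
    finally show "x \<in> gen_set I u J v X0 \<longleftrightarrow> x \<in> {x \<in> L1. \<forall>i\<in>{1..card G}. xs i x \<le> al i}"
      using Seq[of x] unfolding L1_def by simp
  qed
  thus ?thesis unfolding gen_polyhedral_def
    by (intro exI[of _ "card G"] exI[of _ xs] exI[of _ al] exI[of _ L1]) (use dxs cL1 aL1 in simp)
qed


lemma f_rep:
  fixes f :: "'a::real_vector \<Rightarrow> real"
  assumes "linear f"
  shows "f ((\<Sum>i\<in>I. lam i *\<^sub>R u i) + (\<Sum>j\<in>J. mu j *\<^sub>R v j) + z)
        = (\<Sum>i\<in>I. lam i * f (u i)) + (\<Sum>j\<in>J. mu j * f (v j)) + f z"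
  by (simp add: linear_add[OF assms] linear_sum[OF assms] linear_scale[OF assms])

lemma gen_add_X0:
  assumes "x \<in> gen_set I u J v X0" "z \<in> X0" "subspace X0"
  shows "x + z \<in> gen_set I u J v X0"
proof -
  obtain lam mu z0 where x: "x = (\<Sum>i\<in>I. lam i *\<^sub>R u i) + (\<Sum>j\<in>J. mu j *\<^sub>R v j) + z0"
    "\<forall>i\<in>I. lam i \<ge> 0" "(\<Sum>i\<in>I. lam i) = 1" "\<forall>j\<in>J. mu j \<ge> 0" "z0 \<in> X0"
    using assms(1) unfolding gen_set_def by blast
  have "x + z = (\<Sum>i\<in>I. lam i *\<^sub>R u i) + (\<Sum>j\<in>J. mu j *\<^sub>R v j) + (z0 + z)" using x(1) by (simp add: algebra_simps)
  moreover have "z0 + z \<in> X0" using subspace_add[OF assms(3) x(5) assms(2)] .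
  ultimately show ?thesis unfolding gen_set_def using x(2-4) by blast
qed

lemma gen_add_v:
  assumes "x \<in> gen_set I u J v X0" "j \<in> J" "finite J"
  shows "x + v j \<in> gen_set I u J v X0"
proof -
  obtain lam mu z0 where x: "x = (\<Sum>i\<in>I. lam i *\<^sub>R u i) + (\<Sum>j\<in>J. mu j *\<^sub>R v j) + z0"
    "\<forall>i\<in>I. lam i \<ge> 0" "(\<Sum>i\<in>I. lam i) = 1" "\<forall>j\<in>J. mu j \<ge> 0" "z0 \<in> X0"
    using assms(1) unfolding gen_set_def by blast
  define mu' where "mu' j' = mu j' + (if j' = j then 1 else 0)" for j'
  have "(\<Sum>j'\<in>J. mu' j' *\<^sub>R v j') = (\<Sum>j'\<in>J. mu j' *\<^sub>R v j') + (\<Sum>j'\<in>J. (if j' = j then v j' else 0))"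
  proof -
    have "mu' j' *\<^sub>R v j' = mu j' *\<^sub>R v j' + (if j' = j then v j' else 0)" for j'
      by (simp add: mu'_def scaleR_add_left)
    hence "(\<Sum>j'\<in>J. mu' j' *\<^sub>R v j') = (\<Sum>j'\<in>J. mu j' *\<^sub>R v j' + (if j' = j then v j' else 0))"
      by simp
    thus ?thesis by (simp only: sum.distrib)
  qed
  also have "(\<Sum>j'\<in>J. (if j' = j then v j' else 0)) = v j" using assms(2,3) by simp
  finally have "x + v j = (\<Sum>i\<in>I. lam i *\<^sub>R u i) + (\<Sum>j'\<in>J. mu' j' *\<^sub>R v j') + z0"
    using x(1) by (simp add: algebra_simps)
  moreover have "\<forall>j'\<in>J. mu' j' \<ge> 0" using x(4) by (simp add: mu'_def)
  ultimately show ?thesis unfolding gen_set_def using x(2,3,5) by blast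
qed

theorem proposition3p6:
  fixes u v :: "nat \<Rightarrow> 'a::{real_vector, t2_space}"
    and k l :: nat
    and X0 :: "'a set"
    and f :: "'a \<Rightarrow> real"
  assumes X: "lc_tvs TYPE('a)"
    and k: "k \<ge> 1"
    and X0: "subspace X0" "closed X0"
    and D_ne: "gen_set {1..k} u {1..l} v X0 \<noteq> {}"
    and f: "dual_elem f"
    and sol: "\<exists>x\<in>gen_set {1..k} u {1..l} v X0. \<forall>y\<in>gen_set {1..k} u {1..l} v X0. f x \<le> f y"
  shows "{x \<in> gen_set {1..k} u {1..l} v X0. \<forall>y\<in>gen_set {1..k} u {1..l} v X0. f x \<le> f y}
           = gen_set {i0 \<in> {1..k}. \<forall>i\<in>{1..k}. f (u i0) \<le> f (u i)} u
                     {j0 \<in> {1..l}. f (v j0) = 0} v X0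
       \<and> gen_polyhedral
           {x \<in> gen_set {1..k} u {1..l} v X0. \<forall>y\<in>gen_set {1..k} u {1..l} v X0. f x \<le> f y}"
proof -
  define D where "D = gen_set {1..k} u {1..l} v X0"
  define I0 where "I0 = {i0 \<in> {1..k}. \<forall>i\<in>{1..k}. f (u i0) \<le> f (u i)}"
  define J0 where "J0 = {j0 \<in> {1..l}. f (v j0) = 0}"
  have fl: "linear f" using f unfolding dual_elem_def by blast
  obtain xs where xs: "xs \<in> D" "\<And>y. y \<in> D \<Longrightarrow> f xs \<le> f y" using sol unfolding D_def by blast
  have fz: "f z = 0" if z: "z \<in> X0" for z
  proof -
    have "(- f z) *\<^sub>R z \<in> X0" using subspace_scale[OF X0(1) z] .
    hence "xs + (- f z) *\<^sub>R z \<in> D" using gen_add_X0[OF _ _ X0(1)] xs(1) unfolding D_def by blast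
    hence "f xs \<le> f (xs + (- f z) *\<^sub>R z)" by (rule xs(2))
    also have "\<dots> = f xs - f z * f z" using linear_add[OF fl] linear_scale[OF fl] linear_diff[OF fl] by simp
    finally have "f z * f z \<le> 0" by simp
    thus ?thesis by (metis mult_eq_0_iff not_square_less_zero order_le_less)
  qed
  have fv: "f (v j) \<ge> 0" if j: "j \<in> {1..l}" for j
  proof -
    have "xs + v j \<in> D" using gen_add_v[OF _ j] xs(1) unfolding D_def by simp
    hence "f xs \<le> f (xs + v j)" by (rule xs(2))
    thus ?thesis using linear_add[OF fl] by simp
  qed
  have ne: "f ` u ` {1..k} \<noteq> {}" using k by auto
  define m where "m = Min (f ` u ` {1..k})"
  have "m \<in> f ` u ` {1..k}" unfolding m_def by (rule Min_in) (use ne in auto)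
  then obtain i0 where i0: "i0 \<in> {1..k}" "f (u i0) = m" by auto
  have mle: "m \<le> f (u i)" if "i \<in> {1..k}" for i unfolding m_def by (rule Min_le) (use that in auto)
  have uD: "u i0 \<in> D"
  proof -
    define lam where "lam i = (if i = i0 then 1 else (0::real))" for i
    have "lam i *\<^sub>R u i = (if i = i0 then u i else 0)" for i by (simp add: lam_def)
    hence "(\<Sum>i\<in>{1..k}. lam i *\<^sub>R u i) = (\<Sum>i\<in>{1..k}. (if i = i0 then u i else 0))" by simp
    also have "\<dots> = u i0" using i0(1) by simp
    finally have "(\<Sum>i\<in>{1..k}. lam i *\<^sub>R u i) = u i0" .
    moreover have "(\<Sum>i\<in>{1..k}. lam i) = 1" using i0(1) by (simp add: lam_def)
    moreover have "u i0 = (\<Sum>i\<in>{1..k}. lam i *\<^sub>R u i) + (\<Sum>j\<in>{1..l}. (\<lambda>_. 0::real) j *\<^sub>R v j) + 0"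
      using calculation(1) by simp
    moreover have "\<forall>i\<in>{1..k}. lam i \<ge> 0" by (simp add: lam_def)
    ultimately show ?thesis unfolding D_def gen_set_def using subspace_0[OF X0(1)]
      by (intro CollectI exI[of _ lam] exI[of _ "\<lambda>_. 0::real"] exI[of _ 0]) simp
  qed
  have fD: "m \<le> f x" if xD0: "x \<in> D" for x
  proof -
    obtain lam mu z where x: "x = (\<Sum>i\<in>{1..k}. lam i *\<^sub>R u i) + (\<Sum>j\<in>{1..l}. mu j *\<^sub>R v j) + z"
      "\<forall>i\<in>{1..k}. lam i \<ge> 0" "(\<Sum>i\<in>{1..k}. lam i) = 1" "\<forall>j\<in>{1..l}. mu j \<ge> 0" "z \<in> X0"
      using xD0 unfolding D_def gen_set_def by blast
    have "f x = (\<Sum>i\<in>{1..k}. lam i * f (u i)) + (\<Sum>j\<in>{1..l}. mu j * f (v j))"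
      using f_rep[OF fl, of lam u "{1..k}" mu v "{1..l}" z] x(1) fz[OF x(5)] by simp
    moreover have "(\<Sum>i\<in>{1..k}. lam i * m) \<le> (\<Sum>i\<in>{1..k}. lam i * f (u i))"
      by (rule sum_mono) (use x(2) mle in \<open>simp add: mult_left_mono\<close>)
    moreover have "(\<Sum>i\<in>{1..k}. lam i * m) = m" using x(3) by (simp add: sum_distrib_right[symmetric])
    moreover have "0 \<le> (\<Sum>j\<in>{1..l}. mu j * f (v j))"
      by (rule sum_nonneg) (use x(4) fv in simp)
    ultimately show ?thesis by linarith
  qed
  have Sdef: "{x \<in> D. \<forall>y\<in>D. f x \<le> f y} = {x \<in> D. f x = m}"
  proof (intro set_eqI iffI)
    fix x assume "x \<in> {x \<in> D. \<forall>y\<in>D. f x \<le> f y}"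
    hence "x \<in> D" "f x \<le> m" using uD i0(2) by auto
    thus "x \<in> {x \<in> D. f x = m}" using fD by force
  next
    fix x assume "x \<in> {x \<in> D. f x = m}"
    thus "x \<in> {x \<in> D. \<forall>y\<in>D. f x \<le> f y}" using fD by auto
  qed
  have I0sub: "I0 \<subseteq> {1..k}" and J0sub: "J0 \<subseteq> {1..l}" unfolding I0_def J0_def by auto
  have fI0: "f (u i) = m" if "i \<in> I0" for i
    using that i0 mle unfolding I0_def by force
  have eq: "{x \<in> D. f x = m} = gen_set I0 u J0 v X0"
  proof (intro set_eqI iffI)
    fix x assume "x \<in> {x \<in> D. f x = m}"
    hence xD: "x \<in> D" and fx: "f x = m" by auto
    obtain lam mu z where x: "x = (\<Sum>i\<in>{1..k}. lam i *\<^sub>R u i) + (\<Sum>j\<in>{1..l}. mu j *\<^sub>R v j) + z"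
      "\<forall>i\<in>{1..k}. lam i \<ge> 0" "(\<Sum>i\<in>{1..k}. lam i) = 1" "\<forall>j\<in>{1..l}. mu j \<ge> 0" "z \<in> X0"
      using xD unfolding D_def gen_set_def by blast
    have "f x = (\<Sum>i\<in>{1..k}. lam i * f (u i)) + (\<Sum>j\<in>{1..l}. mu j * f (v j))"
      using f_rep[OF fl, of lam u "{1..k}" mu v "{1..l}" z] x(1) fz[OF x(5)] by simp
    moreover have "(\<Sum>i\<in>{1..k}. lam i * m) = m" using x(3) by (simp add: sum_distrib_right[symmetric])
    ultimately have "(\<Sum>i\<in>{1..k}. lam i * (f (u i) - m)) + (\<Sum>j\<in>{1..l}. mu j * f (v j)) = 0"
      using fx by (simp add: right_diff_distrib sum_subtractf)
    moreover have n1: "0 \<le> (\<Sum>i\<in>{1..k}. lam i * (f (u i) - m))"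
      by (rule sum_nonneg) (use x(2) mle in simp)
    moreover have n2: "0 \<le> (\<Sum>j\<in>{1..l}. mu j * f (v j))"
      by (rule sum_nonneg) (use x(4) fv in simp)
    ultimately have z1: "(\<Sum>i\<in>{1..k}. lam i * (f (u i) - m)) = 0" and z2: "(\<Sum>j\<in>{1..l}. mu j * f (v j)) = 0"
      by linarith+
    have t1: "\<forall>i\<in>{1..k}. lam i * (f (u i) - m) = 0"
      using z1 sum_nonneg_eq_0_iff[of "{1..k}" "\<lambda>i. lam i * (f (u i) - m)"] x(2) mle by simp
    have t2: "\<forall>j\<in>{1..l}. mu j * f (v j) = 0"
      using z2 sum_nonneg_eq_0_iff[of "{1..l}" "\<lambda>j. mu j * f (v j)"] x(4) fv by simp
    have lam0: "lam i = 0" if "i \<in> {1..k} - I0" for i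
    proof -
      from that obtain i' where "i' \<in> {1..k}" "f (u i) > f (u i')" unfolding I0_def by force
      hence "f (u i) - m > 0" using mle by force
      thus ?thesis using t1 that by force
    qed
    have mu0: "mu j = 0" if "j \<in> {1..l} - J0" for j
    proof -
      from that have "f (v j) \<noteq> 0" unfolding J0_def by force
      thus ?thesis using t2 that by force
    qed
    have s1: "(\<Sum>i\<in>{1..k}. lam i *\<^sub>R u i) = (\<Sum>i\<in>I0. lam i *\<^sub>R u i)"
      by (rule sum.mono_neutral_right) (use I0sub lam0 in auto)
    have s2: "(\<Sum>i\<in>{1..k}. lam i) = (\<Sum>i\<in>I0. lam i)"
      by (rule sum.mono_neutral_right) (use I0sub lam0 in auto)
    have s3: "(\<Sum>j\<in>{1..l}. mu j *\<^sub>R v j) = (\<Sum>j\<in>J0. mu j *\<^sub>R v j)"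
      by (rule sum.mono_neutral_right) (use J0sub mu0 in auto)
    have "x = (\<Sum>i\<in>I0. lam i *\<^sub>R u i) + (\<Sum>j\<in>J0. mu j *\<^sub>R v j) + z" using x(1) s1 s3 by simp
    moreover have "(\<Sum>i\<in>I0. lam i) = 1" using s2 x(3) by simp
    moreover have "\<forall>i\<in>I0. lam i \<ge> 0" "\<forall>j\<in>J0. mu j \<ge> 0" using x(2,4) I0sub J0sub by auto
    ultimately show "x \<in> gen_set I0 u J0 v X0" unfolding gen_set_def using x(5) by blast
  next
    fix x assume "x \<in> gen_set I0 u J0 v X0"
    then obtain lam mu z where x: "x = (\<Sum>i\<in>I0. lam i *\<^sub>R u i) + (\<Sum>j\<in>J0. mu j *\<^sub>R v j) + z"
      "\<forall>i\<in>I0. lam i \<ge> 0" "(\<Sum>i\<in>I0. lam i) = 1" "\<forall>j\<in>J0. mu j \<ge> 0" "z \<in> X0"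
      unfolding gen_set_def by blast
    define lam' where "lam' i = (if i \<in> I0 then lam i else 0)" for i
    define mu' where "mu' j = (if j \<in> J0 then mu j else 0)" for j
    have s1: "(\<Sum>i\<in>{1..k}. lam' i *\<^sub>R u i) = (\<Sum>i\<in>I0. lam i *\<^sub>R u i)"
    proof -
      have "(\<Sum>i\<in>{1..k}. lam' i *\<^sub>R u i) = (\<Sum>i\<in>I0. lam' i *\<^sub>R u i)"
        by (rule sum.mono_neutral_right) (use I0sub in \<open>auto simp: lam'_def\<close>)
      also have "\<dots> = (\<Sum>i\<in>I0. lam i *\<^sub>R u i)" by (rule sum.cong) (auto simp: lam'_def)
      finally show ?thesis .
    qed
    have s2: "(\<Sum>i\<in>{1..k}. lam' i) = (\<Sum>i\<in>I0. lam i)"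
    proof -
      have "(\<Sum>i\<in>{1..k}. lam' i) = (\<Sum>i\<in>I0. lam' i)"
        by (rule sum.mono_neutral_right) (use I0sub in \<open>auto simp: lam'_def\<close>)
      also have "\<dots> = (\<Sum>i\<in>I0. lam i)" by (rule sum.cong) (auto simp: lam'_def)
      finally show ?thesis .
    qed
    have s3: "(\<Sum>j\<in>{1..l}. mu' j *\<^sub>R v j) = (\<Sum>j\<in>J0. mu j *\<^sub>R v j)"
    proof -
      have "(\<Sum>j\<in>{1..l}. mu' j *\<^sub>R v j) = (\<Sum>j\<in>J0. mu' j *\<^sub>R v j)"
        by (rule sum.mono_neutral_right) (use J0sub in \<open>auto simp: mu'_def\<close>)
      also have "\<dots> = (\<Sum>j\<in>J0. mu j *\<^sub>R v j)" by (rule sum.cong) (auto simp: mu'_def)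
      finally show ?thesis .
    qed
    have "x = (\<Sum>i\<in>{1..k}. lam' i *\<^sub>R u i) + (\<Sum>j\<in>{1..l}. mu' j *\<^sub>R v j) + z" using x(1) s1 s3 by simp
    moreover have "(\<Sum>i\<in>{1..k}. lam' i) = 1" using s2 x(3) by simp
    moreover have "\<forall>i\<in>{1..k}. lam' i \<ge> 0" "\<forall>j\<in>{1..l}. mu' j \<ge> 0" using x(2,4) by (auto simp: lam'_def mu'_def)
    ultimately have xD: "x \<in> D" unfolding D_def gen_set_def using x(5) by blast
    have "f x = (\<Sum>i\<in>I0. lam i * f (u i)) + (\<Sum>j\<in>J0. mu j * f (v j))"
      using f_rep[OF fl, of lam u I0 mu v J0 z] x(1) fz[OF x(5)] by simp
    also have "(\<Sum>i\<in>I0. lam i * f (u i)) = (\<Sum>i\<in>I0. lam i * m)" by (rule sum.cong) (auto simp: fI0)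
    also have "\<dots> = m" using x(3) by (simp add: sum_distrib_right[symmetric])
    also have "(\<Sum>j\<in>J0. mu j * f (v j)) = 0" by (rule sum.neutral) (auto simp: J0_def)
    finally show "x \<in> {x \<in> D. f x = m}" using xD by simp
  qed
  have main: "{x \<in> D. \<forall>y\<in>D. f x \<le> f y} = gen_set I0 u J0 v X0" using Sdef eq by simp
  have "gen_polyhedral (gen_set I0 u J0 v X0)"
    by (rule gen_poly[OF X _ _ X0]) (use I0sub J0sub finite_subset in blast)+
  thus ?thesis using main unfolding D_def I0_def J0_def by simp
qed

end
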